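(* For any graph $G$ with no isolated vertex, order $n$ and maximum degree $\Delta$, $$\left\lceil\frac{2n}{\Delta}\right\rceil\le\gamma_{(2,2,2)}(G)\le 2\gamma_t(G).$$ Furthermore, if $G$ has minimum degree $\delta\ge2$, then $\gamma_{(2,2,2)}(G)\le\gamma_{\times2,t}(G)$.
   Context: All graphs are finite and simple; $N(v)$ is the open neighbourhood. $\gamma_{(2,2,2)}(G)$ is the minimum of $\sum_v f(v)$ over functions $f:V(G)\to\{0,1,2\}$ with $\sum_{u\in N(v)}f(u)\ge2$ for every vertex $v$. $\gamma_t(G)$ is the total domination number (minimum size of $S$ such that every vertex has a neighbour in $S$). $\gamma_{\times2,t}(G)$ (double total domination number) is the minimum size of $S\subseteq V(G)$ such that every vertex has at least two neighbours in $S$. *)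

theory Defs
  imports Complex_Main
begin

definition simple_graph :: "'a set \<Rightarrow> ('a \<Rightarrow> 'a \<Rightarrow> bool) \<Rightarrow> bool" where
  "simple_graph V E \<longleftrightarrow> finite V \<and> (\<forall>u v. E u v \<longrightarrow> u \<in> V \<and> v \<in> V)
     \<and> (\<forall>u v. E u v \<longrightarrow> E v u) \<and> (\<forall>v. \<not> E v v)"

definition nbhd :: "'a set \<Rightarrow> ('a \<Rightarrow> 'a \<Rightarrow> bool) \<Rightarrow> 'a \<Rightarrow> 'a set" where
  "nbhd V E v = {u \<in> V. E v u}"

definition degree :: "'a set \<Rightarrow> ('a \<Rightarrow> 'a \<Rightarrow> bool) \<Rightarrow> 'a \<Rightarrow> nat" where
  "degree V E v = card (nbhd V E v)"

definition max_degree :: "'a set \<Rightarrow> ('a \<Rightarrow> 'a \<Rightarrow> bool) \<Rightarrow> nat" where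
  "max_degree V E = Max (degree V E ` V)"

definition min_degree :: "'a set \<Rightarrow> ('a \<Rightarrow> 'a \<Rightarrow> bool) \<Rightarrow> nat" where
  "min_degree V E = Min (degree V E ` V)"

definition no_isolated :: "'a set \<Rightarrow> ('a \<Rightarrow> 'a \<Rightarrow> bool) \<Rightarrow> bool" where
  "no_isolated V E \<longleftrightarrow> (\<forall>v \<in> V. nbhd V E v \<noteq> {})"

definition is_222_function :: "'a set \<Rightarrow> ('a \<Rightarrow> 'a \<Rightarrow> bool) \<Rightarrow> ('a \<Rightarrow> nat) \<Rightarrow> bool" where
  "is_222_function V E f \<longleftrightarrow> (\<forall>v. v \<notin> V \<longrightarrow> f v = 0) \<and> (\<forall>v \<in> V. f v \<le> 2)
     \<and> (\<forall>v \<in> V. (\<Sum>u \<in> nbhd V E v. f u) \<ge> 2)"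

definition gamma_222 :: "'a set \<Rightarrow> ('a \<Rightarrow> 'a \<Rightarrow> bool) \<Rightarrow> nat" where
  "gamma_222 V E = Min {(\<Sum>v \<in> V. f v) | f. is_222_function V E f}"

definition is_total_dom_set :: "'a set \<Rightarrow> ('a \<Rightarrow> 'a \<Rightarrow> bool) \<Rightarrow> 'a set \<Rightarrow> bool" where
  "is_total_dom_set V E S \<longleftrightarrow> S \<subseteq> V \<and> (\<forall>v \<in> V. nbhd V E v \<inter> S \<noteq> {})"

definition gamma_t :: "'a set \<Rightarrow> ('a \<Rightarrow> 'a \<Rightarrow> bool) \<Rightarrow> nat" where
  "gamma_t V E = Min {card S | S. is_total_dom_set V E S}"

definition is_double_total_dom_set :: "'a set \<Rightarrow> ('a \<Rightarrow> 'a \<Rightarrow> bool) \<Rightarrow> 'a set \<Rightarrow> bool" where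
  "is_double_total_dom_set V E S \<longleftrightarrow> S \<subseteq> V \<and> (\<forall>v \<in> V. card (nbhd V E v \<inter> S) \<ge> 2)"

definition gamma_x2t :: "'a set \<Rightarrow> ('a \<Rightarrow> 'a \<Rightarrow> bool) \<Rightarrow> nat" where
  "gamma_x2t V E = Min {card S | S. is_double_total_dom_set V E S}"

end

theory Submission
  imports Defs
begin

lemma min_lemma:
  fixes g :: "'b \<Rightarrow> nat"
  assumes "P x0" and "\<And>x. P x \<Longrightarrow> g x \<le> B"
  shows "\<exists>x. P x \<and> Min {g x | x. P x} = g x" and "\<And>y. P y \<Longrightarrow> Min {g x | x. P x} \<le> g y"
proof -
  have fin: "finite {g x | x. P x}"
  proof (rule finite_subset)
    show "{g x | x. P x} \<subseteq> {..B}" using assms(2) by auto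
  qed simp
  have ne: "{g x | x. P x} \<noteq> {}" using assms(1) by auto
  have "Min {g x | x. P x} \<in> {g x | x. P x}" using Min_in[OF fin ne] .
  then show "\<exists>x. P x \<and> Min {g x | x. P x} = g x" by auto
  show "\<And>y. P y \<Longrightarrow> Min {g x | x. P x} \<le> g y"
    using fin by (intro Min_le) auto
qed

lemma sum_ge_member:
  fixes f :: "'b \<Rightarrow> nat"
  assumes "finite A" "w \<in> A" "c \<le> f w"
  shows "c \<le> sum f A"
proof -
  have "f w \<le> sum f A" using assms(1,2) by (intro member_le_sum) auto
  then show ?thesis using assms(3) by linarith
qed

lemma sum_ind:
  fixes c :: nat
  assumes "finite A"
  shows "(\<Sum>x\<in>A. if x \<in> S then c else 0) = c * card (A \<inter> S)"
proof -
  have "(\<Sum>x\<in>A. if x \<in> S then c else 0) = (\<Sum>x\<in>{x\<in>A. x \<in> S}. c)"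
    by (rule sum.inter_filter[OF assms, symmetric])
  also have "{x\<in>A. x \<in> S} = A \<inter> S" by blast
  finally show ?thesis by simp
qed

lemma f_bound:
  assumes "finite V" "is_222_function V E f"
  shows "(\<Sum>v\<in>V. f v) \<le> 2 * card V"
proof -
  have "(\<Sum>v\<in>V. f v) \<le> (\<Sum>v\<in>V. 2)"
    using assms(2) unfolding is_222_function_def by (intro sum_mono) auto
  then show ?thesis by simp
qed

lemma ceil_aux:
  fixes n g D :: nat
  assumes "2 * n \<le> g * D" "D > 0"
  shows "\<lceil>2 * real n / real D\<rceil> \<le> int g"
proof -
  have r1: "real (2 * n) \<le> real (g * D)" using assms(1) by (simp only: of_nat_le_iff)
  then have "2 * real n \<le> real g * real D" by simp
  then have "2 * real n / real D \<le> real g" using assms(2) by (simp add: pos_divide_le_eq)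
  then show ?thesis by (simp add: ceiling_le_iff)
qed

lemma dc:
  fixes f :: "'a \<Rightarrow> nat"
  assumes finV: "finite V" and sym: "\<And>u v. E u v \<Longrightarrow> E v u"
  shows "(\<Sum>v\<in>V. \<Sum>u \<in> nbhd V E v. f u) = (\<Sum>u\<in>V. f u * degree V E u)"
proof -
  have "(\<Sum>v\<in>V. \<Sum>u \<in> nbhd V E v. f u) = (\<Sum>v\<in>V. \<Sum>u\<in>V. if E v u then f u else 0)"
    unfolding nbhd_def by (rule sum.cong[OF refl], rule sum.inter_filter[OF finV])
  also have "\<dots> = (\<Sum>u\<in>V. \<Sum>v\<in>V. if E v u then f u else 0)" by (rule sum.swap)
  also have "\<dots> = (\<Sum>u\<in>V. f u * degree V E u)"
  proof (rule sum.cong[OF refl])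
    fix u assume "u \<in> V"
    have "(\<Sum>v\<in>V. if E v u then f u else 0) = (\<Sum>v\<in>{v\<in>V. E v u}. f u)"
      by (rule sum.inter_filter[OF finV, symmetric])
    also have "\<dots> = f u * card {v\<in>V. E v u}" by simp
    also have "{v\<in>V. E v u} = nbhd V E u" unfolding nbhd_def using sym by blast
    finally show "(\<Sum>v\<in>V. if E v u then f u else 0) = f u * degree V E u"
      unfolding degree_def by simp
  qed
  finally show ?thesis .
qed

lemma p1core:
  fixes f :: "'a \<Rightarrow> nat"
  assumes finV: "finite V" and f: "is_222_function V E f"
    and dc: "(\<Sum>v\<in>V. \<Sum>u \<in> nbhd V E v. f u) = (\<Sum>u\<in>V. f u * degree V E u)"
  shows "2 * card V \<le> (\<Sum>v\<in>V. f v) * max_degree V E"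
proof -
  let ?D = "max_degree V E"
  have degle: "degree V E v \<le> ?D" if "v \<in> V" for v
    unfolding max_degree_def using finV that by simp
  have "2 * card V = (\<Sum>v\<in>V. (2::nat))" by simp
  also have "\<dots> \<le> (\<Sum>v\<in>V. \<Sum>u \<in> nbhd V E v. f u)"
    by (rule sum_mono) (use f in \<open>simp add: is_222_function_def\<close>)
  also have "\<dots> = (\<Sum>u\<in>V. f u * degree V E u)" by (rule dc)
  also have "\<dots> \<le> (\<Sum>u\<in>V. f u * ?D)"
    by (rule sum_mono, rule mult_le_mono2, erule degle)
  also have "\<dots> = (\<Sum>v\<in>V. f v) * ?D" by (rule sum_distrib_right[symmetric])
  finally show ?thesis .
qed

theorem theorem15:
  fixes V :: "'a set" and E :: "'a \<Rightarrow> 'a \<Rightarrow> bool"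
  assumes "simple_graph V E" and "V \<noteq> {}" and "no_isolated V E"
  shows "\<lceil>2 * real (card V) / real (max_degree V E)\<rceil> \<le> int (gamma_222 V E)
         \<and> gamma_222 V E \<le> 2 * gamma_t V E
         \<and> (min_degree V E \<ge> 2 \<longrightarrow> gamma_222 V E \<le> gamma_x2t V E)"
proof -
  have finV: "finite V" and sym: "\<And>u v. E u v \<Longrightarrow> E v u" and inV: "\<And>u v. E u v \<Longrightarrow> u \<in> V \<and> v \<in> V"
    using assms(1) unfolding simple_graph_def by auto
  have finN: "\<And>v. finite (nbhd V E v)" using finV unfolding nbhd_def by auto
  have f2: "is_222_function V E (\<lambda>v. if v \<in> V then 2 else 0)"
    unfolding is_222_function_def
  proof (intro conjI)
    show "\<forall>v. v \<notin> V \<longrightarrow> (if v \<in> V then 2 else 0) = (0::nat)" by simp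
    show "\<forall>v\<in>V. (if v \<in> V then 2 else 0) \<le> (2::nat)" by simp
    show "\<forall>v\<in>V. 2 \<le> (\<Sum>u\<in>nbhd V E v. if u \<in> V then 2 else 0::nat)"
    proof
      fix v assume "v \<in> V"
      then obtain w where w: "w \<in> nbhd V E v" using assms(3) unfolding no_isolated_def by blast
      then have "w \<in> V" unfolding nbhd_def by simp
      then have "(2::nat) \<le> (if w \<in> V then 2 else 0)" by simp
      then show "2 \<le> (\<Sum>u\<in>nbhd V E v. if u \<in> V then 2 else 0::nat)"
        by (rule sum_ge_member[OF finN w])
    qed
  qed
  have bnd: "\<And>g. is_222_function V E g \<Longrightarrow> (\<Sum>v\<in>V. g v) \<le> 2 * card V"
    by (rule f_bound[OF finV])
  have M1: "\<exists>g. is_222_function V E g \<and> gamma_222 V E = (\<Sum>v\<in>V. g v)"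
    unfolding gamma_222_def
    by (rule min_lemma(1)[where P="is_222_function V E" and g="\<lambda>f. \<Sum>v\<in>V. f v"
          and B="2 * card V", OF f2 bnd])
  obtain f where fboth: "is_222_function V E f \<and> gamma_222 V E = (\<Sum>v\<in>V. f v)"
    using M1 by (rule exE)
  note f = conjunct1[OF fboth] and fmin = conjunct2[OF fboth]
  have le222: "gamma_222 V E \<le> (\<Sum>v\<in>V. g v)" if "is_222_function V E g" for g
    unfolding gamma_222_def
    by (rule min_lemma(2)[where P="is_222_function V E" and g="\<lambda>f. \<Sum>v\<in>V. f v"
          and B="2 * card V", OF f2 bnd that])
  have P1: "\<lceil>2 * real (card V) / real (max_degree V E)\<rceil> \<le> int (gamma_222 V E)"
  proof -
    obtain v0 where v0: "v0 \<in> V" using assms(2) by blast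
    obtain w where w: "w \<in> nbhd V E v0" using assms(3) v0 unfolding no_isolated_def by blast
    have "degree V E v0 > 0" unfolding degree_def using finN[of v0] w by (simp add: card_gt_0_iff) blast
    moreover have "degree V E v0 \<le> max_degree V E"
      unfolding max_degree_def using finV v0 by simp
    ultimately have Dpos: "max_degree V E > 0" by linarith
    have "2 * card V \<le> gamma_222 V E * max_degree V E"
      unfolding fmin by (rule p1core[OF finV f dc[OF finV sym]])
    then show ?thesis using Dpos by (rule ceil_aux)
  qed
  have tV: "is_total_dom_set V E V"
    using assms(3) unfolding is_total_dom_set_def no_isolated_def nbhd_def by auto
  have tb: "card S \<le> card V" if "is_total_dom_set V E S" for S
    using that finV unfolding is_total_dom_set_def by (simp add: card_mono)
  obtain S where Sboth: "is_total_dom_set V E S \<and> gamma_t V E = card S"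
    using min_lemma(1)[where P="is_total_dom_set V E" and g=card and B="card V", OF tV tb]
    unfolding gamma_t_def by (rule exE)
  note S = conjunct1[OF Sboth] and Smin = conjunct2[OF Sboth]
  have P2: "gamma_222 V E \<le> 2 * gamma_t V E"
  proof -
    let ?g = "\<lambda>v. if v \<in> S then 2 else (0::nat)"
    have g: "is_222_function V E ?g"
      unfolding is_222_function_def
    proof (intro conjI)
      show "\<forall>v. v \<notin> V \<longrightarrow> ?g v = 0" using S unfolding is_total_dom_set_def by auto
      show "\<forall>v\<in>V. ?g v \<le> 2" by simp
      show "\<forall>v\<in>V. 2 \<le> (\<Sum>u\<in>nbhd V E v. ?g u)"
      proof
        fix v assume "v \<in> V"
        then obtain w where w: "w \<in> nbhd V E v" "w \<in> S" using S unfolding is_total_dom_set_def by blast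
        have "(2::nat) \<le> ?g w" using w by simp
        then show "2 \<le> (\<Sum>u\<in>nbhd V E v. ?g u)" by (rule sum_ge_member[OF finN w(1)])
      qed
    qed
    have "V \<inter> S = S" using S unfolding is_total_dom_set_def by blast
    then have "(\<Sum>v\<in>V. ?g v) = 2 * card S"
      using sum_ind[OF finV, of S 2] by simp
    then show ?thesis using le222[OF g] Smin by simp
  qed
  have P3: "gamma_222 V E \<le> gamma_x2t V E" if md: "min_degree V E \<ge> 2"
  proof -
    have degge: "degree V E v \<ge> 2" if "v \<in> V" for v
    proof -
      have "min_degree V E \<le> degree V E v"
        unfolding min_degree_def using finV that by (intro Min_le) auto
      then show ?thesis using md by linarith
    qed
    have dV: "is_double_total_dom_set V E V"
      unfolding is_double_total_dom_set_def
    proof (intro conjI ballI subset_refl)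
      fix v assume "v \<in> V"
      have "nbhd V E v \<inter> V = nbhd V E v" unfolding nbhd_def by blast
      then show "2 \<le> card (nbhd V E v \<inter> V)" using degge[OF \<open>v \<in> V\<close>] unfolding degree_def by simp
    qed
    have db: "card T \<le> card V" if "is_double_total_dom_set V E T" for T
      using that finV unfolding is_double_total_dom_set_def by (simp add: card_mono)
    obtain T where Tboth: "is_double_total_dom_set V E T \<and> gamma_x2t V E = card T"
      using min_lemma(1)[where P="is_double_total_dom_set V E" and g=card and B="card V", OF dV db]
      unfolding gamma_x2t_def by (rule exE)
    note T = conjunct1[OF Tboth] and Tmin = conjunct2[OF Tboth]
    let ?g = "\<lambda>v. if v \<in> T then 1 else (0::nat)"
    have g: "is_222_function V E ?g"
      unfolding is_222_function_def
    proof (intro conjI)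
      show "\<forall>v. v \<notin> V \<longrightarrow> ?g v = 0" using T unfolding is_double_total_dom_set_def by auto
      show "\<forall>v\<in>V. ?g v \<le> 2" by simp
      show "\<forall>v\<in>V. 2 \<le> (\<Sum>u\<in>nbhd V E v. ?g u)"
      proof
        fix v assume v: "v \<in> V"
        have "(\<Sum>u \<in> nbhd V E v. ?g u) = card (nbhd V E v \<inter> T)"
          using sum_ind[OF finN, of T 1 v] by simp
        moreover have "card (nbhd V E v \<inter> T) \<ge> 2" using T v unfolding is_double_total_dom_set_def by blast
        ultimately show "2 \<le> (\<Sum>u\<in>nbhd V E v. ?g u)" by simp
      qed
    qed
    have "V \<inter> T = T" using T unfolding is_double_total_dom_set_def by blast
    then have "(\<Sum>v\<in>V. ?g v) = card T"
      using sum_ind[OF finV, of T 1] by simp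
    then show ?thesis using le222[OF g] Tmin by simp
  qed
  show ?thesis using P1 P2 P3 by blast
qed

end
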